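(* Let $y$ be an optimal (minimum-cost feasible) solution, $S$ an active set for $y$, and $i\in S$. If $y_i<x_i$, then any two distinct $j,j'\in\widetilde\gamma(i)$ with $y_j>x_i$ and $y_{j'}>x_i$ do not overlap, i.e. $|y_j-y_{j'}|\ge r_j+r_{j'}$. Symmetrically, if $y_i>x_i$, then any two distinct $j,j'\in\widetilde\gamma(i)$ with $y_j<x_i$ and $y_{j'}<x_i$ satisfy $|y_j-y_{j'}|\ge r_j+r_{j'}$.
   Context: Barrier coverage problem: sensors $i=1,\dots,n$ with locations $x_i\in\mathbb{R}$ and radii $r_i>0$, indexed so that $x_1\le\cdots\le x_n$; a solution $y\in\mathbb{R}^n$ places sensor $i$ to cover $[y_i-r_i,y_i+r_i]$; it is feasible if these intervals cover $[0,L]$; its cost is $\sum_i|y_i-x_i|$; an optimal solution is a feasible solution of minimum cost. A set $S$ is active for $y$ if $\bigcup_{i\in S}[y_i-r_i,y_i+r_i]\supseteq[0,L]$. For $i\in S$, $\gamma(i)$ is the set of $j\in S$ with ($i<j$ and $y_i>y_j$) or ($i>j$ and $y_i<y_j$); and $\widetilde\gamma(i)=\{j\in\gamma(i): |x_j-y_j|\le|x_i-y_i|\}$. *)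

theory Defs
  imports Complex_Main
begin

text \<open>Barrier coverage. Sensors are indexed by 1..n; locations x, radii r, placements y
  are functions nat => real (only values on 1..n matter).\<close>

definition covers :: "nat set \<Rightarrow> (nat \<Rightarrow> real) \<Rightarrow> (nat \<Rightarrow> real) \<Rightarrow> real \<Rightarrow> bool" where
  "covers S r y L \<longleftrightarrow> {0..L} \<subseteq> (\<Union>i\<in>S. {y i - r i .. y i + r i})"

definition feasible :: "nat \<Rightarrow> (nat \<Rightarrow> real) \<Rightarrow> real \<Rightarrow> (nat \<Rightarrow> real) \<Rightarrow> bool" where
  "feasible n r L y \<longleftrightarrow> covers {1..n} r y L"

definition cost :: "nat \<Rightarrow> (nat \<Rightarrow> real) \<Rightarrow> (nat \<Rightarrow> real) \<Rightarrow> real" where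
  "cost n x y = (\<Sum>i=1..n. \<bar>y i - x i\<bar>)"

definition optimal :: "nat \<Rightarrow> (nat \<Rightarrow> real) \<Rightarrow> (nat \<Rightarrow> real) \<Rightarrow> real \<Rightarrow> (nat \<Rightarrow> real) \<Rightarrow> bool" where
  "optimal n x r L y \<longleftrightarrow> feasible n r L y \<and>
     (\<forall>z. feasible n r L z \<longrightarrow> cost n x y \<le> cost n x z)"

definition active :: "nat \<Rightarrow> (nat \<Rightarrow> real) \<Rightarrow> real \<Rightarrow> (nat \<Rightarrow> real) \<Rightarrow> nat set \<Rightarrow> bool" where
  "active n r L y S \<longleftrightarrow> S \<subseteq> {1..n} \<and> covers S r y L"

definition gamma :: "nat set \<Rightarrow> (nat \<Rightarrow> real) \<Rightarrow> nat \<Rightarrow> nat set" where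
  "gamma S y i = {j \<in> S. (i < j \<and> y i > y j) \<or> (i > j \<and> y i < y j)}"

definition gamma_tilde :: "nat set \<Rightarrow> (nat \<Rightarrow> real) \<Rightarrow> (nat \<Rightarrow> real) \<Rightarrow> nat \<Rightarrow> nat set" where
  "gamma_tilde S x y i = {j \<in> gamma S y i. \<bar>x j - y j\<bar> \<le> \<bar>x i - y i\<bar>}"

end

theory Submission
  imports Defs
begin

lemma cost_upd:
  assumes "k \<in> {1..n}"
  shows "cost n x (y(k:=v)) = cost n x y - \<bar>y k - x k\<bar> + \<bar>v - x k\<bar>"
proof -
  have f: "finite {1..n}" by simp
  have "cost n x (y(k:=v)) = \<bar>v - x k\<bar> + (\<Sum>i\<in>{1..n}-{k}. \<bar>(y(k:=v)) i - x i\<bar>)"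
    unfolding cost_def using sum.remove[OF f assms, of "\<lambda>i. \<bar>(y(k:=v)) i - x i\<bar>"] by simp
  moreover have "(\<Sum>i\<in>{1..n}-{k}. \<bar>(y(k:=v)) i - x i\<bar>) = (\<Sum>i\<in>{1..n}-{k}. \<bar>y i - x i\<bar>)"
    by (rule sum.cong) auto
  moreover have "cost n x y = \<bar>y k - x k\<bar> + (\<Sum>i\<in>{1..n}-{k}. \<bar>y i - x i\<bar>)"
    unfolding cost_def using sum.remove[OF f assms, of "\<lambda>i. \<bar>y i - x i\<bar>"] by simp
  ultimately show ?thesis by simp
qed

lemma feas_upd:
  assumes feas: "feasible n r L y" and k: "k \<in> {1..n}" and m: "m \<in> {1..n}" and mk: "m \<noteq> k"
    and lost: "\<And>p. \<bar>p - y k\<bar> \<le> r k \<Longrightarrow> \<bar>p - v\<bar> > r k \<Longrightarrow> \<bar>p - y m\<bar> \<le> r m"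
  shows "feasible n r L (y(k:=v))"
  unfolding feasible_def covers_def
proof
  fix p assume p: "p \<in> {0..L}"
  then obtain l where l: "l \<in> {1..n}" "p \<in> {y l - r l .. y l + r l}"
    using feas unfolding feasible_def covers_def by blast
  show "p \<in> (\<Union>i\<in>{1..n}. {(y(k:=v)) i - r i .. (y(k:=v)) i + r i})"
  proof (cases "l = k")
    case False thus ?thesis using l by force
  next
    case True
    show ?thesis
    proof (cases "\<bar>p - v\<bar> \<le> r k")
      case True2: True
      have "p \<in> {(y(k:=v)) k - r k .. (y(k:=v)) k + r k}" using True2 by (auto simp: abs_le_iff)
      thus ?thesis using k by blast
    next
      case False
      have "\<bar>p - y k\<bar> \<le> r k" using l True by (auto simp: abs_le_iff)
      hence "\<bar>p - y m\<bar> \<le> r m" using lost False by simp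
      hence "p \<in> {(y(k:=v)) m - r m .. (y(k:=v)) m + r m}" using mk by (auto simp: abs_le_iff)
      thus ?thesis using m by blast
    qed
  qed
qed

lemma improve:
  assumes opt: "optimal n x r L y" and k: "k \<in> {1..n}" and m: "m \<in> {1..n}" and mk: "m \<noteq> k"
    and lost: "\<And>p. \<bar>p - y k\<bar> \<le> r k \<Longrightarrow> \<bar>p - v\<bar> > r k \<Longrightarrow> \<bar>p - y m\<bar> \<le> r m"
    and better: "\<bar>v - x k\<bar> < \<bar>y k - x k\<bar>"
  shows False
proof -
  have f0: "feasible n r L y" using opt unfolding optimal_def by blast
  have "feasible n r L (y(k:=v))" by (rule feas_upd[OF f0 k m mk lost])
  hence "cost n x y \<le> cost n x (y(k:=v))" using opt unfolding optimal_def by blast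
  thus False using cost_upd[OF k, of x y v] better by simp
qed

lemma no_overlap_right0:
  assumes opt: "optimal n x r L y" and a: "a \<in> {1..n}" and b: "b \<in> {1..n}" and ab: "a \<noteq> b"
    and ya: "y a > x a" and yb: "y b > x b" and le: "y a \<le> y b"
  shows "y b - y a \<ge> r a + r b"
proof (rule ccontr)
  assume ov: "\<not> ?thesis"
  show False
  proof (cases "y a + r a \<le> y b + r b")
    case True
    define e where "e = min (r a + r b - (y b - y a)) (y a - x a)"
    have e: "e > 0" "e \<le> r a + r b - (y b - y a)" "e \<le> y a - x a" using ov ya by (auto simp: e_def)
    show False
    proof (rule improve[OF opt a b ab[symmetric], of "y a - e"])
      fix p assume "\<bar>p - y a\<bar> \<le> r a" "r a < \<bar>p - (y a - e)\<bar>"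
      thus "\<bar>p - y b\<bar> \<le> r b" using e True by (auto simp: abs_le_iff abs_less_iff)
    next
      show "\<bar>y a - e - x a\<bar> < \<bar>y a - x a\<bar>" using e by auto
    qed
  next
    case False
    define e where "e = min ((y b - r b) - (y a - r a)) (y b - x b)"
    have e: "e > 0" "e \<le> (y b - r b) - (y a - r a)" "e \<le> y b - x b" using False le yb by (auto simp: e_def)
    show False
    proof (rule improve[OF opt b a ab, of "y b - e"])
      fix p assume "\<bar>p - y b\<bar> \<le> r b" "r b < \<bar>p - (y b - e)\<bar>"
      thus "\<bar>p - y a\<bar> \<le> r a" using e False by (auto simp: abs_le_iff abs_less_iff)
    next
      show "\<bar>y b - e - x b\<bar> < \<bar>y b - x b\<bar>" using e by auto
    qed
  qed
qed

lemma no_overlap_right: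
  assumes opt: "optimal n x r L y" and a: "a \<in> {1..n}" and b: "b \<in> {1..n}" and ab: "a \<noteq> b"
    and ya: "y a > x a" and yb: "y b > x b"
  shows "\<bar>y a - y b\<bar> \<ge> r a + r b"
proof (cases "y a \<le> y b")
  case True thus ?thesis using no_overlap_right0[OF opt a b ab ya yb] by simp
next
  case False thus ?thesis using no_overlap_right0[OF opt b a ab[symmetric] yb ya] by simp
qed

lemma no_overlap_left0:
  assumes opt: "optimal n x r L y" and a: "a \<in> {1..n}" and b: "b \<in> {1..n}" and ab: "a \<noteq> b"
    and ya: "y a < x a" and yb: "y b < x b" and le: "y a \<le> y b"
  shows "y b - y a \<ge> r a + r b"
proof (rule ccontr)
  assume ov: "\<not> ?thesis"
  show False
  proof (cases "y a - r a \<le> y b - r b")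
    case True
    define e where "e = min (r a + r b - (y b - y a)) (x b - y b)"
    have e: "e > 0" "e \<le> r a + r b - (y b - y a)" "e \<le> x b - y b" using ov yb by (auto simp: e_def)
    show False
    proof (rule improve[OF opt b a ab, of "y b + e"])
      fix p assume "\<bar>p - y b\<bar> \<le> r b" "r b < \<bar>p - (y b + e)\<bar>"
      thus "\<bar>p - y a\<bar> \<le> r a" using e True by (auto simp: abs_le_iff abs_less_iff)
    next
      show "\<bar>y b + e - x b\<bar> < \<bar>y b - x b\<bar>" using e by auto
    qed
  next
    case False
    define e where "e = min ((y b + r b) - (y a + r a)) (x a - y a)"
    have e: "e > 0" "e \<le> (y b + r b) - (y a + r a)" "e \<le> x a - y a" using False le ya by (auto simp: e_def)
    show False
    proof (rule improve[OF opt a b ab[symmetric], of "y a + e"])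
      fix p assume "\<bar>p - y a\<bar> \<le> r a" "r a < \<bar>p - (y a + e)\<bar>"
      thus "\<bar>p - y b\<bar> \<le> r b" using e False by (auto simp: abs_le_iff abs_less_iff)
    next
      show "\<bar>y a + e - x a\<bar> < \<bar>y a - x a\<bar>" using e by auto
    qed
  qed
qed

lemma no_overlap_left:
  assumes opt: "optimal n x r L y" and a: "a \<in> {1..n}" and b: "b \<in> {1..n}" and ab: "a \<noteq> b"
    and ya: "y a < x a" and yb: "y b < x b"
  shows "\<bar>y a - y b\<bar> \<ge> r a + r b"
proof (cases "y a \<le> y b")
  case True thus ?thesis using no_overlap_left0[OF opt a b ab ya yb] by simp
next
  case False thus ?thesis using no_overlap_left0[OF opt b a ab[symmetric] yb ya] by simp
qed

theorem mainTheorem6: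
  fixes n :: nat and x r y :: "nat \<Rightarrow> real" and L :: real and S :: "nat set" and i :: nat
  assumes sorted: "\<And>a b. 1 \<le> a \<Longrightarrow> a \<le> b \<Longrightarrow> b \<le> n \<Longrightarrow> x a \<le> x b"
    and rpos: "\<And>a. 1 \<le> a \<Longrightarrow> a \<le> n \<Longrightarrow> r a > 0"
    and opt: "optimal n x r L y"
    and act: "active n r L y S"
    and iS: "i \<in> S"
  shows "(y i < x i \<longrightarrow>
            (\<forall>j\<in>gamma_tilde S x y i. \<forall>j'\<in>gamma_tilde S x y i.
               j \<noteq> j' \<and> y j > x i \<and> y j' > x i \<longrightarrow> \<bar>y j - y j'\<bar> \<ge> r j + r j'))
       \<and> (y i > x i \<longrightarrow>
            (\<forall>j\<in>gamma_tilde S x y i. \<forall>j'\<in>gamma_tilde S x y i.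
               j \<noteq> j' \<and> y j < x i \<and> y j' < x i \<longrightarrow> \<bar>y j - y j'\<bar> \<ge> r j + r j'))"
proof -
  have Sn: "S \<subseteq> {1..n}" using act unfolding active_def by blast
  have iS': "i \<in> {1..n}" using iS Sn by blast
  have R: "y j > x j" if "y i < x i" "j \<in> gamma_tilde S x y i" "y j > x i" for j
  proof -
    have j: "j \<in> S" "j < i" using that unfolding gamma_tilde_def gamma_def by auto
    hence "x j \<le> x i" using sorted[of j i] Sn iS' by force
    thus ?thesis using that by simp
  qed
  have Lf: "y j < x j" if "y i > x i" "j \<in> gamma_tilde S x y i" "y j < x i" for j
  proof -
    have j: "j \<in> S" "i < j" using that unfolding gamma_tilde_def gamma_def by auto
    hence "x i \<le> x j" using sorted[of i j] Sn iS' by force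
    thus ?thesis using that by simp
  qed
  have G: "gamma_tilde S x y i \<subseteq> {1..n}" using Sn unfolding gamma_tilde_def gamma_def by auto
  show ?thesis
  proof (intro conjI impI ballI)
    fix j j' assume h: "y i < x i" "j \<in> gamma_tilde S x y i" "j' \<in> gamma_tilde S x y i"
      "j \<noteq> j' \<and> y j > x i \<and> y j' > x i"
    show "\<bar>y j - y j'\<bar> \<ge> r j + r j'"
      apply (rule no_overlap_right[OF opt])
      using h R G by auto
  next
    fix j j' assume h: "y i > x i" "j \<in> gamma_tilde S x y i" "j' \<in> gamma_tilde S x y i"
      "j \<noteq> j' \<and> y j < x i \<and> y j' < x i"
    show "\<bar>y j - y j'\<bar> \<ge> r j + r j'"
      apply (rule no_overlap_left[OF opt])
      using h Lf G by auto
  qed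
qed

end
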